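(* For every integer $m\ge2$ and every $\alpha\in[0,1]$, no randomized social choice rule on $m$ candidates has distortion smaller than $\frac{3+\alpha}{2}-\frac{1-\alpha}{\lfloor m\rfloor_{\mathrm{even}}}$ on $\alpha$-decisive metric spaces, where $\lfloor m\rfloor_{\mathrm{even}}$ is the largest even integer at most $m$.
   Context: An election: voters $V=\{1,\dots,n\}$, a fixed finite set $C$ of $m$ candidates, a profile $\sigma$ of linear orders over $C$; $\mathrm{top}(i)$ is $i$'s first choice. A distance function $d$ on $V\cup C$ is nonnegative, symmetric and satisfies the triangle inequality (co-location allowed); consistent with $\sigma$ if $d(i,c)\le d(i,c')$ whenever $i$ ranks $c$ above $c'$; $\alpha$-decisive if $d(i,\mathrm{top}(i))\le\alpha\,d(i,c)$ for all $i$ and $c\ne\mathrm{top}(i)$. $\mathrm{SC}(c)=\sum_i d(i,c)$. A randomized rule maps profiles (any number of voters) to distributions over $C$; its distortion on $\alpha$-decisive spaces is $\sup_\sigma\sup_d\mathbb{E}[\mathrm{SC}(f(\sigma))]/\min_c\mathrm{SC}(c)$ over $\alpha$-decisive consistent $d$. *)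

theory Defs
  imports "HOL-Probability.Probability"
begin

text \<open>A profile over candidate set C is a list of rankings (one per voter; voter i is
  index i < length P); a ranking is a list enumerating C without repetition,
  best candidate first.  Voter i ranks c above c' iff c occurs earlier in P!i.\<close>

definition valid_profile :: "'c set \<Rightarrow> 'c list list \<Rightarrow> bool" where
  "valid_profile C P \<longleftrightarrow> (\<forall>r\<in>set P. distinct r \<and> set r = C)"

definition top :: "'c list list \<Rightarrow> nat \<Rightarrow> 'c" where
  "top P i = hd (P ! i)"

definition points :: "'c set \<Rightarrow> nat \<Rightarrow> (nat + 'c) set" where
  "points C n = Inl ` {..<n} \<union> Inr ` C"

text \<open>Distance function on a set S (pseudometric: co-location allowed).\<close>
definition distance_on :: "'a set \<Rightarrow> ('a \<Rightarrow> 'a \<Rightarrow> real) \<Rightarrow> bool" where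
  "distance_on S d \<longleftrightarrow>
     (\<forall>x\<in>S. d x x = 0) \<and>
     (\<forall>x\<in>S. \<forall>y\<in>S. 0 \<le> d x y \<and> d x y = d y x) \<and>
     (\<forall>x\<in>S. \<forall>y\<in>S. \<forall>z\<in>S. d x z \<le> d x y + d y z)"

definition consistent :: "'c list list \<Rightarrow> (nat + 'c \<Rightarrow> nat + 'c \<Rightarrow> real) \<Rightarrow> bool" where
  "consistent P d \<longleftrightarrow>
     (\<forall>i < length P. \<forall>j k. j < k \<and> k < length (P ! i) \<longrightarrow>
        d (Inl i) (Inr (P ! i ! j)) \<le> d (Inl i) (Inr (P ! i ! k)))"

definition decisive :: "real \<Rightarrow> 'c set \<Rightarrow> 'c list list \<Rightarrow> (nat + 'c \<Rightarrow> nat + 'c \<Rightarrow> real) \<Rightarrow> bool" where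
  "decisive \<alpha> C P d \<longleftrightarrow>
     (\<forall>i < length P. \<forall>c\<in>C. c \<noteq> top P i \<longrightarrow>
        d (Inl i) (Inr (top P i)) \<le> \<alpha> * d (Inl i) (Inr c))"

definition SC :: "'c list list \<Rightarrow> (nat + 'c \<Rightarrow> nat + 'c \<Rightarrow> real) \<Rightarrow> 'c \<Rightarrow> real" where
  "SC P d c = (\<Sum>i<length P. d (Inl i) (Inr c))"

definition opt_SC :: "'c set \<Rightarrow> 'c list list \<Rightarrow> (nat + 'c \<Rightarrow> nat + 'c \<Rightarrow> real) \<Rightarrow> real" where
  "opt_SC C P d = Min (SC P d ` C)"

definition floor_even :: "nat \<Rightarrow> nat" where
  "floor_even m = 2 * (m div 2)"

end

theory Submission
  imports Defs
begin
datatype 'c loc = LO | LV 'c | LC 'c | LJ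

fun dl :: "real \<Rightarrow> 'c loc \<Rightarrow> 'c loc \<Rightarrow> real" where
  "dl a LO LO = 0" | "dl a LO (LV _) = 1" | "dl a LO (LC _) = 1 + a" | "dl a LO LJ = 2"
| "dl a (LV b) LO = 1" | "dl a (LV b) (LV c) = (if b = c then 0 else 1 + a)"
| "dl a (LV b) (LC c) = (if b = c then a else 1)" | "dl a (LV b) LJ = 2"
| "dl a (LC b) LO = 1 + a" | "dl a (LC b) (LV c) = (if b = c then a else 1)"
| "dl a (LC b) (LC c) = (if b = c then 0 else 1 + a)" | "dl a (LC b) LJ = 2"
| "dl a LJ LJ = 0" | "dl a LJ _ = 2"

lemma dl_refl[simp]: "dl a x x = 0"
  by (cases x) auto

lemma dl_sym: "dl a x y = dl a y x"
  by (cases x; cases y) auto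

lemma dl_nonneg: "0 \<le> a \<Longrightarrow> 0 \<le> dl a x y"
  by (cases x; cases y) auto

lemma dl_tri: "0 \<le> a \<Longrightarrow> a \<le> 1 \<Longrightarrow> dl a x z \<le> dl a x y + dl a y z"
  by (cases x; cases y; cases z) auto

definition locf :: "'c set \<Rightarrow> 'c set \<Rightarrow> 'c list \<Rightarrow> nat + 'c \<Rightarrow> 'c loc" where
  "locf S T L x = (case x of Inl i \<Rightarrow> (if L ! i \<in> S then LO else LV (L ! i))
      | Inr c \<Rightarrow> (if c \<in> S then LO else if c \<in> T then LC c else LJ))"

definition shape :: "'c set \<Rightarrow> 'c set \<Rightarrow> 'c \<Rightarrow> 'c list \<Rightarrow> bool" where
  "shape S T t r \<longleftrightarrow> (\<exists>xs ys zs. r = t # xs @ ys @ zs \<and> t \<notin> set xs \<and> set zs \<inter> (S \<union> T) = {} \<and>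
     ((t \<in> S \<and> set xs \<subseteq> S \<and> set ys \<subseteq> T) \<or> (t \<in> T \<and> set xs \<subseteq> T \<and> set ys \<subseteq> S)))"

lemma sum_nth_distinct:
  assumes "distinct L"
  shows "(\<Sum>i<length L. g (L ! i)) = (\<Sum>t\<in>set L. (g t :: real))"
proof -
  have "(\<Sum>t\<in>set L. g t) = sum_list (map g L)"
    using assms by (simp add: sum.distinct_set_conv_list)
  also have "\<dots> = (\<Sum>i<length L. g (L ! i))"
    by (simp add: sum_list_sum_nth atLeast0LessThan)
  finally show ?thesis by simp
qed

lemma main:
  fixes S T :: "'c set" and L :: "'c list" and P :: "'c list list" and p :: "'c pmf" and k :: nat and \<alpha> :: real
  assumes fin: "finite C" and disj: "S \<inter> T = {}" and sub: "S \<union> T \<subseteq> C"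
    and cS: "card S = k" and cT: "card T = k" and k1: "k \<ge> 1"
    and dL: "distinct L" and sL: "set L = S \<union> T" and len: "length P = length L"
    and shp: "\<forall>i<length L. shape S T (L ! i) (P ! i)"
    and sp: "set_pmf p \<subseteq> C" and qS: "sum (pmf p) S \<le> 1/2"
    and a0: "0 \<le> \<alpha>" and a1: "\<alpha> \<le> 1"
  shows "\<exists>d. distance_on (points C (length P)) d \<and> consistent P d \<and> decisive \<alpha> C P d \<and>
           opt_SC C P d = k \<and>
           measure_pmf.expectation p (SC P d) \<ge> (2*real k - 1 + (real k+1)*\<alpha> + real k) / 2"
proof -
  define d where "d x y = dl \<alpha> (locf S T L x) (locf S T L y)" for x y
  have dj: "x \<in> T \<Longrightarrow> x \<notin> S" for x using disj by auto
  have finS: "finite S" "finite T" using sub fin by (auto intro: finite_subset)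
  have dist: "distance_on (points C (length P)) d"
    unfolding distance_on_def d_def using dl_nonneg[OF a0] dl_sym dl_tri[OF a0 a1] by auto
  have top: "top P i = L ! i" if "i < length L" for i
    using shp that unfolding shape_def top_def by auto
  have cons: "consistent P d"
    unfolding consistent_def
  proof (intro allI impI)
    fix i j k' assume i: "i < length P" and jk: "j < k' \<and> k' < length (P ! i)"
    define g where "g c = d (Inl i) (Inr c)" for c
    obtain xs ys zs where r: "P ! i = L ! i # xs @ ys @ zs" and tx: "L ! i \<notin> set xs"
      and zs: "set zs \<inter> (S \<union> T) = {}"
      and cs: "(L ! i \<in> S \<and> set xs \<subseteq> S \<and> set ys \<subseteq> T) \<or> (L ! i \<in> T \<and> set xs \<subseteq> T \<and> set ys \<subseteq> S)"
      using shp i len unfolding shape_def by auto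
    have "sorted (map g (P ! i))"
      using cs
    proof
      assume h: "L ! i \<in> S \<and> set xs \<subseteq> S \<and> set ys \<subseteq> T"
      have "map g xs = replicate (length xs) 0" using h
        by (intro replicate_eqI) (auto simp: g_def d_def locf_def subset_iff dj)
      moreover have "map g ys = replicate (length ys) (1+\<alpha>)" using h disj
        by (intro replicate_eqI) (auto simp: g_def d_def locf_def subset_iff dj)
      moreover have "map g zs = replicate (length zs) 2" using h zs
        by (intro replicate_eqI) (auto simp: g_def d_def locf_def subset_iff dj)
      moreover have "g (L ! i) = 0" using h by (simp add: g_def d_def locf_def)
      ultimately show ?thesis using r a0 a1 by (auto simp: sorted_append)
    next
      assume h: "L ! i \<in> T \<and> set xs \<subseteq> T \<and> set ys \<subseteq> S"
      have nS: "L ! i \<notin> S" using h disj by auto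
      have "map g xs = replicate (length xs) 1" using h tx disj
        by (intro replicate_eqI) (auto simp: g_def d_def locf_def subset_iff dj)
      moreover have "map g ys = replicate (length ys) 1" using h disj
        by (intro replicate_eqI) (auto simp: g_def d_def locf_def subset_iff dj)
      moreover have "map g zs = replicate (length zs) 2" using h zs
        by (intro replicate_eqI) (auto simp: g_def d_def locf_def subset_iff dj)
      moreover have "g (L ! i) = \<alpha>" using h nS by (simp add: g_def d_def locf_def)
      ultimately show ?thesis using r a0 a1 by (auto simp: sorted_append)
    qed
    then have "map g (P ! i) ! j \<le> map g (P ! i) ! k'"
      by (rule sorted_nth_mono) (use jk in auto)
    then show "d (Inl i) (Inr (P ! i ! j)) \<le> d (Inl i) (Inr (P ! i ! k'))"
      using jk by (simp add: g_def)
  qed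
  have dec: "decisive \<alpha> C P d"
    unfolding decisive_def
  proof (intro allI impI ballI)
    fix i c assume i: "i < length P" and c: "c \<in> C" and ct: "c \<noteq> top P i"
    have t: "top P i = L ! i" using top i len by simp
    have LS: "L ! i \<in> S \<union> T" using sL i len nth_mem by (metis)
    show "d (Inl i) (Inr (top P i)) \<le> \<alpha> * d (Inl i) (Inr c)"
    proof (cases "L ! i \<in> S")
      case True
      then show ?thesis using t a0 dl_nonneg[OF a0]
        by (simp add: d_def locf_def)
    next
      case False
      then have "L ! i \<in> T" using LS by auto
      then show ?thesis using t False ct a0 a1
        by (auto simp: d_def locf_def)
    qed
  qed
  define X :: real where "X = 2*real k - 1 + (real k+1)*\<alpha>"
  have SCf: "SC P d c = (\<Sum>t\<in>S \<union> T. dl \<alpha> (if t \<in> S then LO else LV t) (locf S T L (Inr c)))" for c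
  proof -
    have "SC P d c = (\<Sum>i<length L. (\<lambda>t. dl \<alpha> (if t \<in> S then LO else LV t) (locf S T L (Inr c))) (L ! i))"
      unfolding SC_def len d_def by (simp add: locf_def)
    also have "\<dots> = (\<Sum>t\<in>S \<union> T. dl \<alpha> (if t \<in> S then LO else LV t) (locf S T L (Inr c)))"
      by (subst sum_nth_distinct[OF dL]) (simp add: sL)
    finally show ?thesis .
  qed
  have SCsplit: "SC P d c = (\<Sum>t\<in>S. dl \<alpha> LO (locf S T L (Inr c))) + (\<Sum>t\<in>T. dl \<alpha> (LV t) (locf S T L (Inr c)))" for c
  proof -
    have "SC P d c = (\<Sum>t\<in>S. dl \<alpha> (if t \<in> S then LO else LV t) (locf S T L (Inr c))) + (\<Sum>t\<in>T. dl \<alpha> (if t \<in> S then LO else LV t) (locf S T L (Inr c)))"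
      unfolding SCf by (rule sum.union_disjoint) (use finS disj in auto)
    moreover have "(\<Sum>t\<in>T. dl \<alpha> (if t \<in> S then LO else LV t) (locf S T L (Inr c))) = (\<Sum>t\<in>T. dl \<alpha> (LV t) (locf S T L (Inr c)))"
      by (rule sum.cong) (use disj in auto)
    ultimately show ?thesis by simp
  qed
  have SC_S: "SC P d c = k" if "c \<in> S" for c
    using that cS cT unfolding SCsplit by (simp add: locf_def)
  have SC_T: "SC P d c = X" if "c \<in> T" for c
  proof -
    have nS: "c \<notin> S" using that disj by auto
    have "(\<Sum>t\<in>T. dl \<alpha> (LV t) (LC c)) = (\<Sum>t\<in>T. 1 + (if t = c then \<alpha> - 1 else 0))"
      by (rule sum.cong) auto
    also have "\<dots> = k + (\<alpha> - 1)"
      using that finS cT by (simp add: sum.distrib)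
    finally have "(\<Sum>t\<in>T. dl \<alpha> (LV t) (LC c)) = k + (\<alpha> - 1)" .
    then show ?thesis using that nS cS unfolding SCsplit X_def by (simp add: locf_def algebra_simps)
  qed
  have SC_J: "SC P d c = 4 * k" if "c \<notin> S \<union> T" for c
    using that cS cT unfolding SCsplit by (simp add: locf_def)
  have Xk: "X \<ge> k" proof - have "0 \<le> (real k + 1) * \<alpha>" using a0 by simp moreover have "real k \<ge> 1" using k1 by simp ultimately show ?thesis unfolding X_def by linarith qed
  have X4: "X \<le> 4 * k" proof - have "(real k + 1) * \<alpha> \<le> real k + 1" using a1 by (simp add: mult_left_le) then show ?thesis unfolding X_def by linarith qed
  have SCge: "SC P d c \<ge> (if c \<in> S then k else X)" if "c \<in> C" for c
    using SC_S SC_T SC_J Xk X4 by (cases "c \<in> S"; cases "c \<in> T") auto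
  have opt: "opt_SC C P d = k"
    unfolding opt_SC_def
  proof (rule Min_eqI)
    show "finite (SC P d ` C)" using fin by simp
    show "y \<ge> k" if "y \<in> SC P d ` C" for y
      using that SCge Xk by (force split: if_splits)
    obtain s where "s \<in> S" using cS k1 by (metis card.empty ex_in_conv not_one_le_zero)
    then show "real k \<in> SC P d ` C" using SC_S sub by (metis UnCI image_eqI subsetD)
  qed
  have E: "measure_pmf.expectation p (SC P d) = (\<Sum>c\<in>C. pmf p c * SC P d c)"
    using integral_measure_pmf[OF fin, of p "SC P d"] sp by auto
  have "(\<Sum>c\<in>C. pmf p c * SC P d c) \<ge> (\<Sum>c\<in>C. pmf p c * (if c \<in> S then k else X))"
    by (rule sum_mono, rule mult_left_mono) (use SCge in auto)
  moreover have "(\<Sum>c\<in>C. pmf p c * (if c \<in> S then k else X)) = (\<Sum>c\<in>C. pmf p c * X) - (\<Sum>c\<in>C. pmf p c * (if c \<in> S then X - k else 0))"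
    by (simp add: sum_subtractf[symmetric] algebra_simps, rule sum.cong, auto simp: algebra_simps)
  moreover have "(\<Sum>c\<in>C. pmf p c * X) = X"
    using sum_pmf_eq_1[OF fin sp] by (simp add: sum_distrib_right[symmetric])
  moreover have "(\<Sum>c\<in>C. pmf p c * (if c \<in> S then X - k else 0)) = (X - k) * sum (pmf p) S"
  proof -
    have "(\<Sum>c\<in>C. pmf p c * (if c \<in> S then X - k else 0)) = (\<Sum>c\<in>C \<inter> S. pmf p c * (X - k))"
      by (simp add: sum.inter_restrict[OF fin] if_distrib cong: if_cong)
    also have "C \<inter> S = S" using sub by auto
    finally show ?thesis by (simp add: sum_distrib_right[symmetric] mult.commute)
  qed
  moreover have "(X - k) * sum (pmf p) S \<le> (X - k) / 2"
    using qS Xk by (metis divide_inverse mult_left_mono diff_ge_0_iff_ge mult.commute inverse_eq_divide mult_1 times_divide_eq_right)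
  ultimately have "(\<Sum>c\<in>C. pmf p c * SC P d c) \<ge> X - (X - k) / 2"
    by linarith
  moreover have "X - (X - k) / 2 = (X + k) / 2" by (simp add: field_simps)
  ultimately have "measure_pmf.expectation p (SC P d) \<ge> (X + k) / 2"
    unfolding E by linarith
  then show ?thesis using dist cons dec opt unfolding X_def by auto
qed

lemma shape_swap: "shape S T t r \<Longrightarrow> shape T S t r"
  unfolding shape_def by blast

theorem theorem5:
  fixes C :: "'c set" and m :: nat and \<alpha> :: real
    and f :: "'c list list \<Rightarrow> 'c pmf"
  assumes "finite C" and "card C = m" and "m \<ge> 2"
    and "0 \<le> \<alpha>" and "\<alpha> \<le> 1"
    and "\<forall>P. valid_profile C P \<longrightarrow> set_pmf (f P) \<subseteq> C"
  shows "\<forall>B < (3 + \<alpha>) / 2 - (1 - \<alpha>) / real (floor_even m).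
           \<exists>P d. valid_profile C P \<and> P \<noteq> [] \<and>
                 distance_on (points C (length P)) d \<and>
                 consistent P d \<and> decisive \<alpha> C P d \<and>
                 opt_SC C P d > 0 \<and>
                 measure_pmf.expectation (f P) (SC P d) > B * opt_SC C P d"
proof (intro allI impI)
  fix Bd assume Bd: "Bd < (3 + \<alpha>) / 2 - (1 - \<alpha>) / real (floor_even m)"
  note fin = assms(1)
  define k where "k = m div 2"
  have k1: "k \<ge> 1" using assms(3) unfolding k_def by simp
  have fe: "real (floor_even m) = 2 * real k" unfolding floor_even_def k_def by simp
  have "k \<le> card C" using assms(2) unfolding k_def by simp
  then obtain A where A: "A \<subseteq> C" "card A = k" "finite A" by (rule obtain_subset_with_card_n)
  have "card (C - A) = m - k" using A assms(2) fin by (simp add: card_Diff_subset)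
  then have "k \<le> card (C - A)" unfolding k_def by simp
  then obtain B where B: "B \<subseteq> C - A" "card B = k" "finite B" by (rule obtain_subset_with_card_n)
  define J where "J = C - A - B"
  obtain as where as: "set as = A" "distinct as" using finite_distinct_list[OF A(3)] by blast
  obtain bs where bs: "set bs = B" "distinct bs" using finite_distinct_list[OF B(3)] by blast
  obtain js where js: "set js = J" "distinct js"
    using finite_distinct_list[of J] fin unfolding J_def by blast
  have AB: "A \<inter> B = {}" using B by auto
  define vote where "vote c = c # (if c \<in> A then remove1 c as @ bs else remove1 c bs @ as) @ js" for c
  define L where "L = as @ bs"
  define P where "P = map vote L"
  have dL: "distinct L" using as bs AB unfolding L_def by auto
  have sL: "set L = A \<union> B" using as bs unfolding L_def by auto
  have lenP: "length P = length L" unfolding P_def by simp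
  have lenL: "length L = 2 * k" unfolding L_def using as bs A B
    by (metis distinct_card length_append mult_2)
  have valid: "valid_profile C P"
    unfolding valid_profile_def P_def
  proof
    fix r assume "r \<in> set (map vote L)"
    then obtain c where c: "c \<in> A \<union> B" "r = vote c" using sL by auto
    show "distinct r \<and> set r = C"
    proof (cases "c \<in> A")
      case True
      then show ?thesis using c as bs js AB A B unfolding vote_def J_def
        by (auto simp: set_remove1_eq)
    next
      case False
      then have "c \<in> B" using c by auto
      then show ?thesis using c as bs js AB A B False unfolding vote_def J_def
        by (auto simp: set_remove1_eq)
    qed
  qed
  have shp: "\<forall>i<length L. shape A B (L ! i) (P ! i)"
  proof (intro allI impI)
    fix i assume i: "i < length L"
    have c: "L ! i \<in> A \<union> B" using i sL nth_mem by metis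
    have Pi: "P ! i = vote (L ! i)" using i unfolding P_def by simp
    show "shape A B (L ! i) (P ! i)"
    proof (cases "L ! i \<in> A")
      case True
      then show ?thesis unfolding Pi vote_def shape_def using as bs js AB
        by (intro exI[of _ "remove1 (L ! i) as"] exI[of _ bs] exI[of _ js])
           (auto simp: set_remove1_eq J_def)
    next
      case False
      then have "L ! i \<in> B" using c by auto
      then show ?thesis unfolding Pi vote_def shape_def using as bs js AB False
        by (intro exI[of _ "remove1 (L ! i) bs"] exI[of _ as] exI[of _ js])
           (auto simp: set_remove1_eq J_def)
    qed
  qed
  define p where "p = f P"
  have sp: "set_pmf p \<subseteq> C" using assms(6) valid unfolding p_def by blast
  have "sum (pmf p) A + sum (pmf p) B = sum (pmf p) (A \<union> B)"
    using A B AB by (simp add: sum.union_disjoint)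
  also have "\<dots> \<le> sum (pmf p) C"
    by (rule sum_mono2) (use fin A B in auto)
  also have "\<dots> = 1" by (rule sum_pmf_eq_1[OF fin sp])
  finally have q: "sum (pmf p) A + sum (pmf p) B \<le> 1" .
  have "\<exists>d. distance_on (points C (length P)) d \<and> consistent P d \<and> decisive \<alpha> C P d \<and>
           opt_SC C P d = k \<and>
           measure_pmf.expectation p (SC P d) \<ge> (2*real k - 1 + (real k+1)*\<alpha> + real k) / 2"
  proof (cases "sum (pmf p) A \<le> 1/2")
    case True
    show ?thesis
      by (rule main[OF fin AB _ A(2) B(2) k1 dL sL lenP shp sp True assms(4,5)]) (use A B in auto)
  next
    case False
    then have qB: "sum (pmf p) B \<le> 1/2" using q by linarith
    have AB': "B \<inter> A = {}" using AB by auto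
    have sL': "set L = B \<union> A" using sL by auto
    have shp': "\<forall>i<length L. shape B A (L ! i) (P ! i)" using shp by (auto intro: shape_swap)
    show ?thesis
      by (rule main[OF fin AB' _ B(2) A(2) k1 dL sL' lenP shp' sp qB assms(4,5)]) (use A B in auto)
  qed
  then obtain d where d: "distance_on (points C (length P)) d" "consistent P d" "decisive \<alpha> C P d"
     "opt_SC C P d = k" "measure_pmf.expectation p (SC P d) \<ge> (2*real k - 1 + (real k+1)*\<alpha> + real k) / 2"
    by blast
  have kpos: "real k > 0" using k1 by simp
  have bk: "((3 + \<alpha>) / 2 - (1 - \<alpha>) / real (floor_even m)) * real k = (2*real k - 1 + (real k+1)*\<alpha> + real k) / 2"
    unfolding fe using kpos by (simp add: field_simps)
  have "Bd * real k < ((3 + \<alpha>) / 2 - (1 - \<alpha>) / real (floor_even m)) * real k"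
    using Bd kpos by (simp add: mult_strict_right_mono)
  then have "measure_pmf.expectation (f P) (SC P d) > Bd * opt_SC C P d"
    using d(5) bk unfolding d(4) p_def[symmetric] by linarith
  moreover have "P \<noteq> []" using lenP lenL k1 by auto
  ultimately show "\<exists>P d. valid_profile C P \<and> P \<noteq> [] \<and>
                 distance_on (points C (length P)) d \<and>
                 consistent P d \<and> decisive \<alpha> C P d \<and>
                 opt_SC C P d > 0 \<and>
                 measure_pmf.expectation (f P) (SC P d) > Bd * opt_SC C P d"
    using valid d(1,2,3,4) kpos by (intro exI[of _ P] exI[of _ d]) (simp add: d(4))
qed

end
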